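(* Let $(A,\circ_A)$ be a Leibniz algebra and $(l,r,V)$ a representation of it. Every invertible anti-$\mathcal O$-operator $T:V\to A$ of $(A,\circ_A)$ associated to $(l,r,V)$ is strong.
   Context: All vector spaces are finite-dimensional over a field $\mathbb K$ of characteristic zero. A Leibniz algebra is a vector space $A$ with a multiplication $\circ_A$ satisfying $x\circ_A(y\circ_A z)=(x\circ_A y)\circ_A z+y\circ_A(x\circ_A z)$. A representation of $(A,\circ_A)$ is a triple $(l,r,V)$ with linear maps $l,r:A\to\mathrm{End}(V)$ such that for all $x,y\in A,v\in V$: $l(x\circ_A y)v=l(x)l(y)v-l(y)l(x)v$; $r(x\circ_A y)v=l(x)r(y)v-r(y)l(x)v$; $r(y)l(x)v=-r(y)r(x)v$. An anti-$\mathcal O$-operator of $(A,\circ_A)$ associated to $(l,r,V)$ is a linear map $T:V\to A$ with $(Tu)\circ_A(Tv)=-T\big(l(Tu)v+r(Tv)u\big)$ for all $u,v\in V$; it is strong if moreover $l\big((Tu)\circ_A(Tv)\big)w+r\big((Tu)\circ_A(Tw)\big)v-r\big((Tv)\circ_A(Tw)\big)u=0$ for all $u,v,w\in V$. *)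

theory Defs
  imports Complex_Main
begin

definition fin_dim_vs :: "('k::field \<Rightarrow> 'a::ab_group_add \<Rightarrow> 'a) \<Rightarrow> bool" where
  "fin_dim_vs s \<longleftrightarrow> (\<exists>B. finite_dimensional_vector_space s B)"

definition leibniz_algebra ::
  "('k::field \<Rightarrow> 'a::ab_group_add \<Rightarrow> 'a) \<Rightarrow> ('a \<Rightarrow> 'a \<Rightarrow> 'a) \<Rightarrow> bool" where
  "leibniz_algebra sA m \<longleftrightarrow>
     vector_space sA \<and>
     (\<forall>x. Vector_Spaces.linear sA sA (m x)) \<and>
     (\<forall>y. Vector_Spaces.linear sA sA (\<lambda>x. m x y)) \<and>
     (\<forall>x y z. m x (m y z) = m (m x y) z + m y (m x z))"

definition leibniz_rep ::
  "('k::field \<Rightarrow> 'a::ab_group_add \<Rightarrow> 'a) \<Rightarrow> ('a \<Rightarrow> 'a \<Rightarrow> 'a) \<Rightarrow>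
   ('k \<Rightarrow> 'v::ab_group_add \<Rightarrow> 'v) \<Rightarrow> ('a \<Rightarrow> 'v \<Rightarrow> 'v) \<Rightarrow> ('a \<Rightarrow> 'v \<Rightarrow> 'v) \<Rightarrow> bool" where
  "leibniz_rep sA m sV l r \<longleftrightarrow>
     vector_space sV \<and>
     (\<forall>x. Vector_Spaces.linear sV sV (l x)) \<and>
     (\<forall>x. Vector_Spaces.linear sV sV (r x)) \<and>
     (\<forall>v. Vector_Spaces.linear sA sV (\<lambda>x. l x v)) \<and>
     (\<forall>v. Vector_Spaces.linear sA sV (\<lambda>x. r x v)) \<and>
     (\<forall>x y v. l (m x y) v = l x (l y v) - l y (l x v)) \<and>
     (\<forall>x y v. r (m x y) v = l x (r y v) - r y (l x v)) \<and>
     (\<forall>x y v. r y (l x v) = - r y (r x v))"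

definition anti_O_operator ::
  "('k::field \<Rightarrow> 'a::ab_group_add \<Rightarrow> 'a) \<Rightarrow> ('a \<Rightarrow> 'a \<Rightarrow> 'a) \<Rightarrow>
   ('k \<Rightarrow> 'v::ab_group_add \<Rightarrow> 'v) \<Rightarrow> ('a \<Rightarrow> 'v \<Rightarrow> 'v) \<Rightarrow> ('a \<Rightarrow> 'v \<Rightarrow> 'v) \<Rightarrow>
   ('v \<Rightarrow> 'a) \<Rightarrow> bool" where
  "anti_O_operator sA m sV l r T \<longleftrightarrow>
     Vector_Spaces.linear sV sA T \<and>
     (\<forall>u v. m (T u) (T v) = - T (l (T u) v + r (T v) u))"

definition strong_anti_O_operator ::
  "('k::field \<Rightarrow> 'a::ab_group_add \<Rightarrow> 'a) \<Rightarrow> ('a \<Rightarrow> 'a \<Rightarrow> 'a) \<Rightarrow>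
   ('k \<Rightarrow> 'v::ab_group_add \<Rightarrow> 'v) \<Rightarrow> ('a \<Rightarrow> 'v \<Rightarrow> 'v) \<Rightarrow> ('a \<Rightarrow> 'v \<Rightarrow> 'v) \<Rightarrow>
   ('v \<Rightarrow> 'a) \<Rightarrow> bool" where
  "strong_anti_O_operator sA m sV l r T \<longleftrightarrow>
     anti_O_operator sA m sV l r T \<and>
     (\<forall>u v w. l (m (T u) (T v)) w + r (m (T u) (T w)) v - r (m (T v) (T w)) u = 0)"

end

theory Submission
  imports Defs
begin

lemma lin_add: "Vector_Spaces.linear s1 s2 f \<Longrightarrow> f (a + b) = f a + f b"
  unfolding Vector_Spaces.linear_def using module_hom.add by blast

lemma lin_neg: "Vector_Spaces.linear s1 s2 f \<Longrightarrow> f (- a) = - f a"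
  unfolding Vector_Spaces.linear_def using module_hom.neg by blast

lemma lin_diff: "Vector_Spaces.linear s1 s2 f \<Longrightarrow> f (a - b) = f a - f b"
  unfolding Vector_Spaces.linear_def using module_hom.diff by blast

lemma half_cancel:
  fixes s :: "'k::field_char_0 \<Rightarrow> 'v::ab_group_add \<Rightarrow> 'v" and a :: 'v
  assumes "vector_space s" and "a + a = 0"
  shows "a = 0"
proof -
  have M: "module s" using assms(1) by (simp add: vector_space_def module_def)
  have "s (1/2) (a + a) = s (1/2) a + s (1/2) a" by (rule module.scale_right_distrib[OF M])
  also have "\<dots> = s (1/2 + 1/2) a" by (rule module.scale_left_distrib[OF M, symmetric])
  also have "\<dots> = a" using module.scale_one[OF M] by simp
  finally have "s (1/2) (a + a) = a" .
  moreover have "s (1/2) 0 = 0" using module.scale_zero_right[OF M] by blast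
  ultimately show ?thesis using assms(2) by simp
qed

theorem proposition2p10:
  fixes sA :: "'k::field_char_0 \<Rightarrow> 'a::ab_group_add \<Rightarrow> 'a"
    and m :: "'a \<Rightarrow> 'a \<Rightarrow> 'a"
    and sV :: "'k \<Rightarrow> 'v::ab_group_add \<Rightarrow> 'v"
    and l r :: "'a \<Rightarrow> 'v \<Rightarrow> 'v"
    and T :: "'v \<Rightarrow> 'a"
  assumes "leibniz_algebra sA m"
    and "fin_dim_vs sA"
    and "fin_dim_vs sV"
    and "leibniz_rep sA m sV l r"
    and "anti_O_operator sA m sV l r T"
    and "bij T"
  shows "strong_anti_O_operator sA m sV l r T"
proof -
  have LA: "\<And>x y z. m x (m y z) = m (m x y) z + m y (m x z)"
    using assms(1) unfolding leibniz_algebra_def by blast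
  have vsV: "vector_space sV" and
    ll: "\<And>x. Vector_Spaces.linear sV sV (l x)" and
    rl: "\<And>x. Vector_Spaces.linear sV sV (r x)" and
    R1: "\<And>x y v. l (m x y) v = l x (l y v) - l y (l x v)" and
    R2: "\<And>x y v. r (m x y) v = l x (r y v) - r y (l x v)" and
    R3: "\<And>x y v. r y (l x v) = - r y (r x v)"
    using assms(4) unfolding leibniz_rep_def by blast+
  have Tl: "Vector_Spaces.linear sV sA T" and
    AO: "\<And>u v. m (T u) (T v) = - T (l (T u) v + r (T v) u)"
    using assms(5) unfolding anti_O_operator_def by blast+
  have inj: "inj T" using assms(6) bij_is_inj by blast
  have key: "l (m (T u) (T v)) w + r (m (T u) (T w)) v - r (m (T v) (T w)) u = 0" for u v w
  proof -
    define P where "P a b = l (T a) b + r (T b) a" for a b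
    have AO': "m (T a) (T b) = T (- P a b)" for a b
      unfolding P_def AO lin_neg[OF Tl] ..
    have "T (- P u (- P v w)) = T (- P (- P u v) w) + T (- P v (- P u w))"
      using LA[of "T u" "T v" "T w"] by (simp only: AO')
    hence "T (- P u (- P v w)) = T (- P (- P u v) w + - P v (- P u w))"
      by (simp only: lin_add[OF Tl])
    hence E: "- P u (- P v w) = - P (- P u v) w + - P v (- P u w)"
      using inj by (simp add: inj_eq)
    have yz: "T (- P v w) = m (T v) (T w)" "T (- P u v) = m (T u) (T v)" "T (- P u w) = m (T u) (T w)"
      by (simp_all add: AO')
    have E2: "- (l (T u) (- P v w) + r (m (T v) (T w)) u) =
       - (l (m (T u) (T v)) w + r (T w) (- P u v)) + - (l (T v) (- P u w) + r (m (T u) (T w)) v)"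
      using E unfolding P_def[of u "- P v w"] P_def[of "- P u v" w] P_def[of v "- P u w"] yz .
    have E3: "l (T u) (l (T v) w) + l (T u) (r (T w) v) - r (m (T v) (T w)) u =
       - l (m (T u) (T v)) w + r (T w) (l (T u) v) + r (T w) (r (T v) u) + l (T v) (l (T u) w) + l (T v) (r (T w) u) - r (m (T u) (T w)) v"
      using E2 unfolding P_def lin_add[OF ll] lin_neg[OF ll] lin_add[OF rl] lin_neg[OF rl] by (simp add: algebra_simps)
    have "(l (m (T u) (T v)) w + r (m (T u) (T w)) v - r (m (T v) (T w)) u) + 
          (l (m (T u) (T v)) w + r (m (T u) (T w)) v - r (m (T v) (T w)) u) = 0"
      using E3 unfolding R1[of "T u" "T v" w] R2[of "T u" "T w" v] R2[of "T v" "T w" u] R3[of "T w" "T v" u] R3[of "T w" "T u" v]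
      by (simp add: algebra_simps)
    thus ?thesis using half_cancel[OF vsV] by blast
  qed
  show ?thesis unfolding strong_anti_O_operator_def using assms(5) key by blast
qed

end
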